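(* Let $1<w\le 2$, $1<h\le 2$, $n\ge 2$ and $\frac12\le y_1<\dots<y_n\le h-\frac12$. Every layout of these $n$ squares has gap at most $\frac{w+h-2}{n-1}$.
   Context: The instance is the strip $T=[0,w]\times[0,h]$ with the given $y_i$. A layout is a pair $(\mathbf x,\prec)$ where $\mathbf x=(x_1,\dots,x_n)$ with $x_i\in[\frac12,w-\frac12]$, and $\prec$ is a total order (stacking order) on the squares $s_1,\dots,s_n$, where $s_i$ is the closed axis-parallel unit square with centre $(x_i,y_i)$. If $s_i\prec s_j$ we say $s_j$ is in front of $s_i$ and $s_i$ is behind $s_j$. A point $p$ on the boundary of $s_i$ is visible if every square $s_j$ ($j\neq i$) containing $p$ is behind $s_i$. The visible perimeter of $s_i$ is the total length of its visible boundary points; the gap of $s_i$ is its visible perimeter minus $2$, and the gap of a layout is the minimum of the gaps of its squares. *)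

theory Defs
  imports "HOL-Analysis.Analysis"
begin

text \<open>Squares are indexed by 0..n-1. The stacking order is given by an injective
  rank function rk on {..<n}: s_i is behind s_j iff rk i < rk j.\<close>

definition unit_sq :: "real \<Rightarrow> real \<Rightarrow> (real \<times> real) set" where
  "unit_sq a b = {p. \<bar>fst p - a\<bar> \<le> 1/2 \<and> \<bar>snd p - b\<bar> \<le> 1/2}"

definition is_layout :: "real \<Rightarrow> nat \<Rightarrow> (nat \<Rightarrow> real) \<Rightarrow> (nat \<Rightarrow> nat) \<Rightarrow> bool" where
  "is_layout w n x rk \<longleftrightarrow> (\<forall>i<n. 1/2 \<le> x i \<and> x i \<le> w - 1/2) \<and> inj_on rk {..<n}"

definition visible_pt ::
  "nat \<Rightarrow> (nat \<Rightarrow> real) \<Rightarrow> (nat \<Rightarrow> real) \<Rightarrow> (nat \<Rightarrow> nat) \<Rightarrow> nat \<Rightarrow> real \<times> real \<Rightarrow> bool" where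
  "visible_pt n x y rk i p \<longleftrightarrow>
     p \<in> frontier (unit_sq (x i) (y i)) \<and>
     (\<forall>j<n. j \<noteq> i \<and> p \<in> unit_sq (x j) (y j) \<longrightarrow> rk j < rk i)"

definition sq_edge :: "real \<Rightarrow> real \<Rightarrow> nat \<Rightarrow> real \<Rightarrow> real \<times> real" where
  "sq_edge a b k t =
     (if k = 0 then (a - 1/2 + t, b - 1/2)
      else if k = 1 then (a + 1/2, b - 1/2 + t)
      else if k = 2 then (a - 1/2 + t, b + 1/2)
      else (a - 1/2, b - 1/2 + t))"

definition visible_perimeter ::
  "nat \<Rightarrow> (nat \<Rightarrow> real) \<Rightarrow> (nat \<Rightarrow> real) \<Rightarrow> (nat \<Rightarrow> nat) \<Rightarrow> nat \<Rightarrow> real" where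
  "visible_perimeter n x y rk i =
     (\<Sum>k<4. measure lebesgue {t \<in> {0..1}. visible_pt n x y rk i (sq_edge (x i) (y i) k t)})"

definition sq_gap :: "nat \<Rightarrow> (nat \<Rightarrow> real) \<Rightarrow> (nat \<Rightarrow> real) \<Rightarrow> (nat \<Rightarrow> nat) \<Rightarrow> nat \<Rightarrow> real" where
  "sq_gap n x y rk i = visible_perimeter n x y rk i - 2"

definition layout_gap :: "nat \<Rightarrow> (nat \<Rightarrow> real) \<Rightarrow> (nat \<Rightarrow> real) \<Rightarrow> (nat \<Rightarrow> nat) \<Rightarrow> real" where
  "layout_gap n x y rk = Min ((\<lambda>i. sq_gap n x y rk i) ` {..<n})"

end

theory Submission
  imports Defs
begin


definition lvis :: "nat set \<Rightarrow> (nat \<Rightarrow> nat) \<Rightarrow> (nat \<Rightarrow> real) \<Rightarrow> nat \<Rightarrow> real \<Rightarrow> bool" where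
  "lvis S rk c i e \<longleftrightarrow> (\<forall>j\<in>S. j \<noteq> i \<and> \<bar>e - c j\<bar> \<le> 1/2 \<longrightarrow> rk j < rk i)"

lemma lvis_mono: "lvis S rk c i e \<Longrightarrow> T \<subseteq> S \<Longrightarrow> lvis T rk c i e"
  unfolding lvis_def by blast

lemma line_count:
  assumes "finite S" "S \<noteq> {}" "\<forall>i\<in>S. \<forall>j\<in>S. \<bar>c i - c j\<bar> \<le> 1"
  shows "(\<Sum>i\<in>S. of_bool (lvis S rk c i (c i - 1/2)) + of_bool (lvis S rk c i (c i + 1/2)) :: real)
           \<le> real (card S) + 1"
  using assms
proof (induction "card S" arbitrary: S rule: less_induct)
  case less
  show ?case
  proof (cases "card S = 1")
    case True
    then obtain a where "S = {a}" using card_1_singletonE by blast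
    then show ?thesis by simp
  next
    case False
    obtain m where m: "m \<in> S" "\<forall>j\<in>S. rk m \<le> rk j"
    proof -
      have "Min (rk ` S) \<in> rk ` S" using less.prems by (intro Min_in) auto
      then obtain m where "m \<in> S" "rk m = Min (rk ` S)" by auto
      moreover have "\<forall>j\<in>S. Min (rk ` S) \<le> rk j" using less.prems by auto
      ultimately show ?thesis using that by auto
    qed
    define S' where "S' = S - {m}"
    have cS: "card S = Suc (card S')" using m less.prems S'_def
      by (simp add: card_Suc_Diff1 card_gt_0_iff)
    have ne: "S' \<noteq> {}" using False cS by auto
    have fin: "finite S'" using less.prems S'_def by auto
    have IH: "(\<Sum>i\<in>S'. of_bool (lvis S' rk c i (c i - 1/2)) + of_bool (lvis S' rk c i (c i + 1/2)) :: real)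
           \<le> real (card S') + 1"
      using less.hyps[of S'] cS ne fin less.prems(3) S'_def by auto
    have le1: "(\<Sum>i\<in>S'. of_bool (lvis S rk c i (c i - 1/2)) + of_bool (lvis S rk c i (c i + 1/2)) :: real)
           \<le> (\<Sum>i\<in>S'. of_bool (lvis S' rk c i (c i - 1/2)) + of_bool (lvis S' rk c i (c i + 1/2)))"
      apply (rule sum_mono)
      using lvis_mono[of S rk c _ _ S'] S'_def by (auto simp: of_bool_def)
    obtain j where j: "j \<in> S'" using ne by auto
    have jS: "j \<in> S" "j \<noteq> m" using j S'_def by auto
    have mterm: "(of_bool (lvis S rk c m (c m - 1/2)) + of_bool (lvis S rk c m (c m + 1/2)) :: real) \<le> 1"
    proof (cases "c j \<le> c m")
      case True
      have "\<not> lvis S rk c m (c m - 1/2)"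
      proof
        assume "lvis S rk c m (c m - 1/2)"
        moreover have "\<bar>c m - 1/2 - c j\<bar> \<le> 1/2"
        proof -
          have d: "\<bar>c m - c j\<bar> \<le> 1" using less.prems(3) jS m(1) by blast
          show ?thesis using d True unfolding abs_le_iff by linarith
        qed
        ultimately have "rk j < rk m" unfolding lvis_def using jS by blast
        then show False using m(2) jS by force
      qed
      then show ?thesis by simp
    next
      case False
      have "\<not> lvis S rk c m (c m + 1/2)"
      proof
        assume "lvis S rk c m (c m + 1/2)"
        moreover have "\<bar>c m + 1/2 - c j\<bar> \<le> 1/2"
        proof -
          have d: "\<bar>c m - c j\<bar> \<le> 1" using less.prems(3) jS m(1) by blast
          show ?thesis using d False unfolding abs_le_iff by linarith
        qed
        ultimately have "rk j < rk m" unfolding lvis_def using jS by blast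
        then show False using m(2) jS by force
      qed
      then show ?thesis by simp
    qed
    have "(\<Sum>i\<in>S. of_bool (lvis S rk c i (c i - 1/2)) + of_bool (lvis S rk c i (c i + 1/2)) :: real)
       = (of_bool (lvis S rk c m (c m - 1/2)) + of_bool (lvis S rk c m (c m + 1/2)))
         + (\<Sum>i\<in>S'. of_bool (lvis S rk c i (c i - 1/2)) + of_bool (lvis S rk c i (c i + 1/2)))"
      unfolding S'_def by (rule sum.remove[OF less.prems(1) m(1)])
    also have "\<dots> \<le> 1 + (real (card S') + 1)" using mterm le1 IH by linarith
    finally show ?thesis using cS by simp
  qed
qed



lemma unit_sq_eq: "unit_sq a b = {a-1/2..a+1/2} \<times> {b-1/2..b+1/2}"
  unfolding unit_sq_def by (auto simp: abs_if split: if_split_asm)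

lemma frontier_unit_sq:
  "(p, q) \<in> frontier (unit_sq a b) \<longleftrightarrow> \<bar>p - a\<bar> \<le> 1/2 \<and> \<bar>q - b\<bar> \<le> 1/2 \<and> (\<bar>p - a\<bar> = 1/2 \<or> \<bar>q - b\<bar> = 1/2)"
proof -
  have "frontier (unit_sq a b) = unit_sq a b - {a-1/2<..<a+1/2} \<times> {b-1/2<..<b+1/2}"
    unfolding frontier_def unit_sq_eq closure_Times interior_Times by simp
  then show ?thesis unfolding unit_sq_def by (auto simp: abs_if split: if_split_asm)
qed

lemma vis_h:
  assumes "\<bar>e - y i\<bar> = 1/2"
  shows "visible_pt n x y rk i (s, e) \<longleftrightarrow> \<bar>s - x i\<bar> \<le> 1/2 \<and>
     (\<forall>j<n. j \<noteq> i \<and> \<bar>s - x j\<bar> \<le> 1/2 \<and> \<bar>e - y j\<bar> \<le> 1/2 \<longrightarrow> rk j < rk i)"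
  using assms unfolding visible_pt_def frontier_unit_sq unfolding unit_sq_def by auto

lemma vis_v:
  assumes "\<bar>e - x i\<bar> = 1/2"
  shows "visible_pt n x y rk i (e, s) \<longleftrightarrow> \<bar>s - y i\<bar> \<le> 1/2 \<and>
     (\<forall>j<n. j \<noteq> i \<and> \<bar>e - x j\<bar> \<le> 1/2 \<and> \<bar>s - y j\<bar> \<le> 1/2 \<longrightarrow> rk j < rk i)"
  using assms unfolding visible_pt_def frontier_unit_sq unfolding unit_sq_def by auto

definition Vset :: "nat \<Rightarrow> (nat \<Rightarrow> real) \<Rightarrow> (nat \<Rightarrow> real) \<Rightarrow> (nat \<Rightarrow> nat) \<Rightarrow> nat \<Rightarrow> real \<Rightarrow> real set" where
  "Vset n u c rk i e = {s. \<bar>s - u i\<bar> \<le> 1/2 \<and> (\<forall>j<n. j \<noteq> i \<and> \<bar>s - u j\<bar> \<le> 1/2 \<and> \<bar>e - c j\<bar> \<le> 1/2 \<longrightarrow> rk j < rk i)}"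

lemma Vset_borel: "Vset n u c rk i e \<in> sets borel"
  unfolding Vset_def by measurable

lemma Vset_lmeas: "Vset n u c rk i e \<in> lmeasurable"
proof (rule bounded_set_imp_lmeasurable)
  show "bounded (Vset n u c rk i e)"
    by (rule bounded_subset[of "{u i - 1/2 .. u i + 1/2}"]) (auto simp: Vset_def abs_if split: if_split_asm)
  show "Vset n u c rk i e \<in> sets lebesgue" proof -
    have "sets borel \<subseteq> sets lebesgue" by force
    then show ?thesis using Vset_borel by blast
  qed
qed

lemma trans_meas: "measure lebesgue {t \<in> {0..1}. P (a + t)} = measure lebesgue {s \<in> {a..a+1::real}. P s}"
proof -
  have "{s \<in> {a..a+1}. P s} = (+) a ` {t \<in> {0..1}. P (a + t)}"
    apply (rule set_eqI, rule iffI)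
    subgoal for s by (rule image_eqI[of _ _ "s - a"]) auto
    by auto
  then show ?thesis by (simp add: measure_translation)
qed



lemma filt: "finite A \<Longrightarrow> S = {x\<in>A. P x} \<Longrightarrow> sum f S = sum (\<lambda>x. if P x then f x else 0) A"
  by (simp add: sum.inter_filter)

lemma pointwise:
  assumes u: "\<forall>i<n. 1/2 \<le> u i \<and> u i \<le> L - 1/2" and c: "\<forall>i<n. \<forall>j<n. \<bar>c i - c j\<bar> \<le> 1"
  shows "(\<Sum>i<n. indicator (Vset n u c rk i (c i - 1/2)) s + indicator (Vset n u c rk i (c i + 1/2)) s :: real)
     \<le> (\<Sum>i<n. indicator {u i - 1/2..u i + 1/2} s) + indicator {0..L} s"
proof -
  define S where "S = {i\<in>{..<n}. \<bar>s - u i\<bar> \<le> 1/2}"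
  have finS: "finite S" unfolding S_def by auto
  have key: "indicator (Vset n u c rk i e) s = (if \<bar>s - u i\<bar> \<le> 1/2 then of_bool (lvis S rk c i e) else 0 :: real)"
    for i e by (auto simp: Vset_def lvis_def S_def indicator_def)
  have "(\<Sum>i<n. indicator (Vset n u c rk i (c i - 1/2)) s + indicator (Vset n u c rk i (c i + 1/2)) s :: real)
     = (\<Sum>i<n. if \<bar>s - u i\<bar> \<le> 1/2 then of_bool (lvis S rk c i (c i - 1/2)) + of_bool (lvis S rk c i (c i + 1/2)) else 0)"
    by (intro sum.cong) (auto simp: key)
  also have "\<dots> = (\<Sum>i\<in>S. of_bool (lvis S rk c i (c i - 1/2)) + of_bool (lvis S rk c i (c i + 1/2)))"
    by (rule filt[symmetric]) (auto simp: S_def)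
  finally have L1: "(\<Sum>i<n. indicator (Vset n u c rk i (c i - 1/2)) s + indicator (Vset n u c rk i (c i + 1/2)) s :: real)
     = (\<Sum>i\<in>S. of_bool (lvis S rk c i (c i - 1/2)) + of_bool (lvis S rk c i (c i + 1/2)))" .
  have "(\<Sum>i<n. indicator {u i - 1/2..u i + 1/2} s :: real) = (\<Sum>i<n. if \<bar>s - u i\<bar> \<le> 1/2 then 1 else 0)"
    by (intro sum.cong) (auto simp: indicator_def abs_if)
  also have "\<dots> = (\<Sum>i\<in>S. 1)" by (rule filt[symmetric]) (auto simp: S_def)
  also have "\<dots> = real (card S)" by simp
  finally have R1: "(\<Sum>i<n. indicator {u i - 1/2..u i + 1/2} s :: real) = real (card S)" .
  show ?thesis
  proof (cases "S = {}")
    case True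
    then show ?thesis using L1 R1 by simp
  next
    case False
    then obtain k where k: "k \<in> S" by auto
    have "s \<in> {0..L}" using k u unfolding S_def by (auto simp: abs_if split: if_split_asm)
    moreover have "(\<Sum>i\<in>S. of_bool (lvis S rk c i (c i - 1/2)) + of_bool (lvis S rk c i (c i + 1/2)) :: real) \<le> real (card S) + 1"
      by (rule line_count[OF finS False]) (use c in \<open>auto simp: S_def\<close>)
    ultimately show ?thesis using L1 R1 by simp
  qed
qed

lemma lm_integrable: "S \<in> lmeasurable \<Longrightarrow> integrable lebesgue (indicator S :: real \<Rightarrow> real)"
  by (auto simp: fmeasurable_def)

lemma sum_meas:
  assumes u: "\<forall>i<n. 1/2 \<le> u i \<and> u i \<le> L - 1/2" and c: "\<forall>i<n. \<forall>j<n. \<bar>c i - c j\<bar> \<le> 1" and L: "0 \<le> L"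
  shows "(\<Sum>i<n. measure lebesgue (Vset n u c rk i (c i - 1/2)) + measure lebesgue (Vset n u c rk i (c i + 1/2)))
       \<le> real n + L"
proof -
  have "(\<Sum>i<n. measure lebesgue (Vset n u c rk i (c i - 1/2)) + measure lebesgue (Vset n u c rk i (c i + 1/2)))
     = (\<Sum>i<n. integral\<^sup>L lebesgue (\<lambda>s. indicator (Vset n u c rk i (c i - 1/2)) s + indicator (Vset n u c rk i (c i + 1/2)) s :: real))"
  proof (rule sum.cong[OF refl])
    fix i
    have "integral\<^sup>L lebesgue (\<lambda>s. indicator (Vset n u c rk i (c i - 1/2)) s + indicator (Vset n u c rk i (c i + 1/2)) s :: real)
      = integral\<^sup>L lebesgue (indicator (Vset n u c rk i (c i - 1/2)) :: real \<Rightarrow> real) + integral\<^sup>L lebesgue (indicator (Vset n u c rk i (c i + 1/2)) :: real \<Rightarrow> real)"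
      by (rule Bochner_Integration.integral_add) (auto intro!: lm_integrable Vset_lmeas)
    then show "measure lebesgue (Vset n u c rk i (c i - 1/2)) + measure lebesgue (Vset n u c rk i (c i + 1/2))
      = integral\<^sup>L lebesgue (\<lambda>s. indicator (Vset n u c rk i (c i - 1/2)) s + indicator (Vset n u c rk i (c i + 1/2)) s :: real)"
      by simp
  qed
  also have "\<dots> = integral\<^sup>L lebesgue (\<lambda>s. \<Sum>i<n. indicator (Vset n u c rk i (c i - 1/2)) s + indicator (Vset n u c rk i (c i + 1/2)) s :: real)"
    by (rule Bochner_Integration.integral_sum[symmetric]) (auto intro!: lm_integrable Vset_lmeas)
  also have "\<dots> \<le> integral\<^sup>L lebesgue (\<lambda>s. (\<Sum>i<n. indicator {u i - 1/2..u i + 1/2} s) + indicator {0..L} s :: real)"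
    by (rule Bochner_Integration.integral_mono) (auto intro!: lm_integrable Vset_lmeas pointwise[OF u c])
  also have "\<dots> = (\<Sum>i<n. integral\<^sup>L lebesgue (indicator {u i - 1/2..u i + 1/2} :: real \<Rightarrow> real)) + integral\<^sup>L lebesgue (indicator {0..L} :: real \<Rightarrow> real)"
    by (subst Bochner_Integration.integral_add) (auto intro!: lm_integrable Bochner_Integration.integral_sum)
  also have "\<dots> = real n + L" using L by simp
  finally show ?thesis .
qed



lemma int_set: "{s \<in> {a - 1/2..a - 1/2 + 1}. \<bar>s - a\<bar> \<le> 1/2 \<and> Q s} = {s. \<bar>s - a\<bar> \<le> 1/2 \<and> Q s}"
  for a :: real by (auto simp: abs_if split: if_split_asm)

lemma VP_eq:
  "visible_perimeter n x y rk i =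
     (measure lebesgue (Vset n x y rk i (y i - 1/2)) + measure lebesgue (Vset n x y rk i (y i + 1/2)))
   + (measure lebesgue (Vset n y x rk i (x i - 1/2)) + measure lebesgue (Vset n y x rk i (x i + 1/2)))"
proof -
  have h0: "visible_pt n x y rk i (s, y i - 1/2) \<longleftrightarrow> \<bar>s - x i\<bar> \<le> 1/2 \<and>
     (\<forall>j<n. j \<noteq> i \<and> \<bar>s - x j\<bar> \<le> 1/2 \<and> \<bar>(y i - 1/2) - y j\<bar> \<le> 1/2 \<longrightarrow> rk j < rk i)" for s
    by (rule vis_h) simp
  have h2: "visible_pt n x y rk i (s, y i + 1/2) \<longleftrightarrow> \<bar>s - x i\<bar> \<le> 1/2 \<and>
     (\<forall>j<n. j \<noteq> i \<and> \<bar>s - x j\<bar> \<le> 1/2 \<and> \<bar>(y i + 1/2) - y j\<bar> \<le> 1/2 \<longrightarrow> rk j < rk i)" for s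
    by (rule vis_h) simp
  have h1: "visible_pt n x y rk i (x i + 1/2, s) \<longleftrightarrow> \<bar>s - y i\<bar> \<le> 1/2 \<and>
     (\<forall>j<n. j \<noteq> i \<and> \<bar>s - y j\<bar> \<le> 1/2 \<and> \<bar>(x i + 1/2) - x j\<bar> \<le> 1/2 \<longrightarrow> rk j < rk i)" for s
    using vis_v[of "x i + 1/2" x i n y rk s] by auto
  have h3: "visible_pt n x y rk i (x i - 1/2, s) \<longleftrightarrow> \<bar>s - y i\<bar> \<le> 1/2 \<and>
     (\<forall>j<n. j \<noteq> i \<and> \<bar>s - y j\<bar> \<le> 1/2 \<and> \<bar>(x i - 1/2) - x j\<bar> \<le> 1/2 \<longrightarrow> rk j < rk i)" for s
    using vis_v[of "x i - 1/2" x i n y rk s] by auto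
  have e0: "measure lebesgue {t \<in> {0..1}. visible_pt n x y rk i (sq_edge (x i) (y i) 0 t)}
      = measure lebesgue (Vset n x y rk i (y i - 1/2))"
  proof -
    have "measure lebesgue {t \<in> {0..1}. visible_pt n x y rk i (sq_edge (x i) (y i) 0 t)}
       = measure lebesgue {t \<in> {0..1}. (\<lambda>s. visible_pt n x y rk i (s, y i - 1/2)) (x i - 1/2 + t)}"
      by (simp add: sq_edge_def)
    also have "\<dots> = measure lebesgue {s \<in> {x i - 1/2..x i - 1/2 + 1}. visible_pt n x y rk i (s, y i - 1/2)}"
      by (rule trans_meas)
    also have "\<dots> = measure lebesgue (Vset n x y rk i (y i - 1/2))"
      unfolding h0 int_set Vset_def ..
    finally show ?thesis .
  qed
  have e2: "measure lebesgue {t \<in> {0..1}. visible_pt n x y rk i (sq_edge (x i) (y i) 2 t)}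
      = measure lebesgue (Vset n x y rk i (y i + 1/2))"
  proof -
    have "measure lebesgue {t \<in> {0..1}. visible_pt n x y rk i (sq_edge (x i) (y i) 2 t)}
       = measure lebesgue {t \<in> {0..1}. (\<lambda>s. visible_pt n x y rk i (s, y i + 1/2)) (x i - 1/2 + t)}"
      by (simp add: sq_edge_def)
    also have "\<dots> = measure lebesgue {s \<in> {x i - 1/2..x i - 1/2 + 1}. visible_pt n x y rk i (s, y i + 1/2)}"
      by (rule trans_meas)
    also have "\<dots> = measure lebesgue (Vset n x y rk i (y i + 1/2))"
      unfolding h2 int_set Vset_def ..
    finally show ?thesis .
  qed
  have e1: "measure lebesgue {t \<in> {0..1}. visible_pt n x y rk i (sq_edge (x i) (y i) 1 t)}
      = measure lebesgue (Vset n y x rk i (x i + 1/2))"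
  proof -
    have "measure lebesgue {t \<in> {0..1}. visible_pt n x y rk i (sq_edge (x i) (y i) 1 t)}
       = measure lebesgue {t \<in> {0..1}. (\<lambda>s. visible_pt n x y rk i (x i + 1/2, s)) (y i - 1/2 + t)}"
      by (simp add: sq_edge_def)
    also have "\<dots> = measure lebesgue {s \<in> {y i - 1/2..y i - 1/2 + 1}. visible_pt n x y rk i (x i + 1/2, s)}"
      by (rule trans_meas)
    also have "\<dots> = measure lebesgue (Vset n y x rk i (x i + 1/2))"
      unfolding h1 int_set Vset_def ..
    finally show ?thesis .
  qed
  have e3: "measure lebesgue {t \<in> {0..1}. visible_pt n x y rk i (sq_edge (x i) (y i) 3 t)}
      = measure lebesgue (Vset n y x rk i (x i - 1/2))"
  proof -
    have "measure lebesgue {t \<in> {0..1}. visible_pt n x y rk i (sq_edge (x i) (y i) 3 t)}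
       = measure lebesgue {t \<in> {0..1}. (\<lambda>s. visible_pt n x y rk i (x i - 1/2, s)) (y i - 1/2 + t)}"
      by (simp add: sq_edge_def)
    also have "\<dots> = measure lebesgue {s \<in> {y i - 1/2..y i - 1/2 + 1}. visible_pt n x y rk i (x i - 1/2, s)}"
      by (rule trans_meas)
    also have "\<dots> = measure lebesgue (Vset n y x rk i (x i - 1/2))"
      unfolding h3 int_set Vset_def ..
    finally show ?thesis .
  qed
  have s4: "(\<Sum>k<4. f k) = f 0 + f 1 + f 2 + (f 3 :: real)" for f :: "nat \<Rightarrow> real"
    by (simp add: eval_nat_numeral)
  show ?thesis unfolding visible_perimeter_def s4 e0 e1 e2 e3 by simp
qed

lemma Vset_top:
  assumes "\<forall>j<n. j \<noteq> i \<longrightarrow> rk j < rk i"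
  shows "measure lebesgue (Vset n u c rk i e) = 1"
proof -
  have "Vset n u c rk i e = {u i - 1/2 .. u i + 1/2}"
    using assms unfolding Vset_def by (auto simp: abs_if split: if_split_asm)
  then show ?thesis by simp
qed



theorem lemma4:
  fixes w h :: real and n :: nat and x y :: "nat \<Rightarrow> real" and rk :: "nat \<Rightarrow> nat"
  assumes "1 < w" "w \<le> 2" "1 < h" "h \<le> 2" "n \<ge> 2"
    and "1/2 \<le> y 0" "\<And>i. Suc i < n \<Longrightarrow> y i < y (Suc i)" "y (n - 1) \<le> h - 1/2"
    and "is_layout w n x rk"
  shows "layout_gap n x y rk \<le> (w + h - 2) / (real n - 1)"
proof -
  have xb: "\<forall>i<n. 1/2 \<le> x i \<and> x i \<le> w - 1/2" and inj: "inj_on rk {..<n}"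
    using assms(9) unfolding is_layout_def by auto
  have mono: "y i \<le> y j" if "i \<le> j" "j < n" for i j
    using that
  proof (induction j)
    case 0 then show ?case by simp
  next
    case (Suc j)
    show ?case
    proof (cases "i = Suc j")
      case True then show ?thesis by simp
    next
      case False
      then have "y i \<le> y j" using Suc by simp
      moreover have "y j < y (Suc j)" using assms(7) Suc.prems by simp
      ultimately show ?thesis by simp
    qed
  qed
  have yb: "\<forall>i<n. 1/2 \<le> y i \<and> y i \<le> h - 1/2"
  proof (intro allI impI conjI)
    fix i assume i: "i < n"
    show "1/2 \<le> y i" using mono[of 0 i] i assms(6) by simp
    have "i \<le> n - 1" using i by simp
    then have "y i \<le> y (n - 1)" using mono[of i "n - 1"] i by simp
    then show "y i \<le> h - 1/2" using assms(8) by simp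
  qed
  have xc: "\<forall>i<n. \<forall>j<n. \<bar>x i - x j\<bar> \<le> 1"
  proof (intro allI impI)
    fix i j assume ij: "i < n" "j < n"
    then have "1/2 \<le> x i" "x i \<le> w - 1/2" "1/2 \<le> x j" "x j \<le> w - 1/2" using xb by auto
    then show "\<bar>x i - x j\<bar> \<le> 1" using assms(2) unfolding abs_le_iff by auto
  qed
  have yc: "\<forall>i<n. \<forall>j<n. \<bar>y i - y j\<bar> \<le> 1"
  proof (intro allI impI)
    fix i j assume ij: "i < n" "j < n"
    then have "1/2 \<le> y i" "y i \<le> h - 1/2" "1/2 \<le> y j" "y j \<le> h - 1/2" using yb by auto
    then show "\<bar>y i - y j\<bar> \<le> 1" using assms(4) unfolding abs_le_iff by auto
  qed
  have H: "(\<Sum>i<n. measure lebesgue (Vset n x y rk i (y i - 1/2)) + measure lebesgue (Vset n x y rk i (y i + 1/2)))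
       \<le> real n + w"
    by (rule sum_meas[OF xb yc]) (use assms(1) in simp)
  have V: "(\<Sum>i<n. measure lebesgue (Vset n y x rk i (x i - 1/2)) + measure lebesgue (Vset n y x rk i (x i + 1/2)))
       \<le> real n + h"
    by (rule sum_meas[OF yb xc]) (use assms(3) in simp)
  have sumVP: "(\<Sum>i<n. visible_perimeter n x y rk i) \<le> 2 * real n + w + h"
    using H V unfolding VP_eq sum.distrib by simp
  have sumgap: "(\<Sum>i<n. sq_gap n x y rk i) \<le> w + h"
    using sumVP unfolding sq_gap_def sum_subtractf by simp
  have z: "0 \<in> {..<n}" using assms(5) by simp
  have "Max (rk ` {..<n}) \<in> rk ` {..<n}" using z by (intro Max_in) auto
  then obtain f where f: "f < n" "rk f = Max (rk ` {..<n})" by auto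
  have front: "\<forall>j<n. j \<noteq> f \<longrightarrow> rk j < rk f"
  proof (intro allI impI)
    fix j assume j: "j < n" "j \<noteq> f"
    have "rk j \<le> rk f" using f j by simp
    moreover have "rk j \<noteq> rk f" using inj j f(1) by (auto simp: inj_on_def)
    ultimately show "rk j < rk f" by simp
  qed
  have gapf: "sq_gap n x y rk f = 2"
    unfolding sq_gap_def VP_eq using Vset_top[OF front] by simp
  have fin: "finite ({..<n} - {f})" by simp
  have card: "card ({..<n} - {f}) = n - 1" using f by simp
  have sum_rest: "(\<Sum>i\<in>{..<n} - {f}. sq_gap n x y rk i) \<le> w + h - 2"
    using sumgap gapf sum.remove[of "{..<n}" f "sq_gap n x y rk"] f by simp
  have Mle: "layout_gap n x y rk \<le> sq_gap n x y rk i" if "i < n" for i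
    unfolding layout_gap_def using that by (intro Min_le) auto
  have "real (n - 1) * layout_gap n x y rk \<le> (\<Sum>i\<in>{..<n} - {f}. sq_gap n x y rk i)"
    using sum_bounded_below[of "{..<n} - {f}" "layout_gap n x y rk" "sq_gap n x y rk"] Mle card by simp
  then have "(real n - 1) * layout_gap n x y rk \<le> w + h - 2"
    using sum_rest assms(5) by (simp add: of_nat_diff)
  moreover have "real n - 1 > 0" using assms(5) by simp
  ultimately show ?thesis by (simp add: pos_le_divide_eq mult.commute)
qed

end
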